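(* Let $\delta\in[0,1/2]$ satisfy $H(\delta)<1/3$. Then there exist arbitrarily long binary linear $3$-CIS codes of rate $1/3$ with relative minimum distance at least $\delta$; more precisely, for all sufficiently large $k$ there is a binary linear $3$-CIS $[3k,k]$ code of minimum distance at least $3\delta k$.
   Context: $H(x)=-x\log_2x-(1-x)\log_2(1-x)$ is the binary entropy function. A binary linear $[3k,k]$ code is $3$-CIS if its coordinate set can be partitioned into $3$ pairwise disjoint information sets, an information set being a set of $k$ coordinates whose columns in a generator matrix are linearly independent. *)

theory Defs
  imports Complex_Main
begin

text \<open>Binary entropy function. Note: in Isabelle, log 2 0 = 0, so H 0 = H 1 = 0,
  matching the usual convention 0 log 0 = 0.\<close>
definition H :: "real \<Rightarrow> real" where
  "H x = - x * log 2 x - (1 - x) * log 2 (1 - x)"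

text \<open>Binary vectors over GF(2) are represented as bool-valued functions; a k x n
  matrix G over GF(2) is a function nat => nat => bool (entry in row i, column j),
  only the entries with i < k, j < n being relevant.\<close>
definition row_comb :: "(nat \<Rightarrow> nat \<Rightarrow> bool) \<Rightarrow> nat set \<Rightarrow> nat \<Rightarrow> bool" where
  "row_comb G S j = odd (card {i \<in> S. G i j})"

definition rows_independent :: "(nat \<Rightarrow> nat \<Rightarrow> bool) \<Rightarrow> nat \<Rightarrow> nat \<Rightarrow> bool" where
  "rows_independent G k n \<longleftrightarrow>
     (\<forall>S \<subseteq> {..<k}. (\<forall>j<n. \<not> row_comb G S j) \<longrightarrow> S = {})"

definition generator_matrix :: "(nat \<Rightarrow> nat \<Rightarrow> bool) \<Rightarrow> nat \<Rightarrow> nat \<Rightarrow> bool" where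
  "generator_matrix G k n \<longleftrightarrow> rows_independent G k n"

definition code :: "(nat \<Rightarrow> nat \<Rightarrow> bool) \<Rightarrow> nat \<Rightarrow> nat \<Rightarrow> (nat \<Rightarrow> bool) set" where
  "code G k n = {(\<lambda>j. j < n \<and> row_comb G S j) | S. S \<subseteq> {..<k}}"

definition cols_independent :: "(nat \<Rightarrow> nat \<Rightarrow> bool) \<Rightarrow> nat \<Rightarrow> nat set \<Rightarrow> bool" where
  "cols_independent G k I \<longleftrightarrow>
     (\<forall>T \<subseteq> I. (\<forall>i<k. \<not> odd (card {j \<in> T. G i j})) \<longrightarrow> T = {})"

definition information_set :: "(nat \<Rightarrow> nat \<Rightarrow> bool) \<Rightarrow> nat \<Rightarrow> nat \<Rightarrow> nat set \<Rightarrow> bool" where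
  "information_set G k n I \<longleftrightarrow> I \<subseteq> {..<n} \<and> card I = k \<and> cols_independent G k I"

definition three_CIS :: "(nat \<Rightarrow> nat \<Rightarrow> bool) \<Rightarrow> nat \<Rightarrow> nat \<Rightarrow> bool" where
  "three_CIS G k n \<longleftrightarrow>
     (\<exists>I1 I2 I3. I1 \<union> I2 \<union> I3 = {..<n} \<and> I1 \<inter> I2 = {} \<and> I1 \<inter> I3 = {} \<and> I2 \<inter> I3 = {}
        \<and> information_set G k n I1 \<and> information_set G k n I2 \<and> information_set G k n I3)"

definition hamming_dist :: "nat \<Rightarrow> (nat \<Rightarrow> bool) \<Rightarrow> (nat \<Rightarrow> bool) \<Rightarrow> nat" where
  "hamming_dist n x y = card {j \<in> {..<n}. x j \<noteq> y j}"

definition min_dist_ge :: "(nat \<Rightarrow> bool) set \<Rightarrow> nat \<Rightarrow> real \<Rightarrow> bool" where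
  "min_dist_ge C n d \<longleftrightarrow> (\<forall>x\<in>C. \<forall>y\<in>C. x \<noteq> y \<longrightarrow> d \<le> real (hamming_dist n x y))"

end

theory Submission
  imports Defs "HOL-Library.FuncSet"
begin
lemma H_deriv:
  assumes "0 < x" "x < 1"
  shows "(H has_real_derivative (log 2 (1-x) - log 2 x)) (at x)"
proof -
  have "((\<lambda>x. - x * log 2 x - (1 - x) * log 2 (1 - x)) has_real_derivative
     (- (1 * log 2 x + x * (1 / (ln 2 * x))) - ((-1) * log 2 (1-x) + (1-x) * ((-1) / (ln 2 * (1-x)))))) (at x)"
    using assms by (auto intro!: derivative_eq_intros)
  moreover have "(- (1 * log 2 x + x * (1 / (ln 2 * x))) - ((-1) * log 2 (1-x) + (1-x) * ((-1) / (ln 2 * (1-x))))) = log 2 (1-x) - log 2 x"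
    using assms by (simp add: field_simps)
  ultimately show ?thesis unfolding H_def[abs_def] by simp
qed

lemma H_mono:
  assumes "0 < a" "a \<le> b" "b \<le> 1/2"
  shows "H a \<le> H b"
proof (rule DERIV_nonneg_imp_increasing_open[OF assms(2)])
  fix x assume x: "a < x" "x < b"
  have "log 2 x \<le> log 2 (1-x)" using x assms by simp
  then show "\<exists>y. DERIV H x :> y \<and> 0 \<le> y"
    using H_deriv[of x] x assms by (intro exI[of _ "log 2 (1-x) - log 2 x"]) auto
next
  show "continuous_on {a..b} H"
  proof (rule continuous_at_imp_continuous_on, safe)
    fix x assume "x \<in> {a..b}"
    then show "isCont H x" using H_deriv[of x] assms by (intro DERIV_isCont) auto
  qed
qed

lemma ln2_le: "ln (2::real) \<le> 5/6"
proof -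
  have "ln (4/3::real) + ln (3/2) = ln (4/3 * (3/2))" by (subst ln_mult) auto
  then have "ln (2::real) = ln (4/3) + ln (3/2)" by simp
  also have "\<dots> \<le> (4/3 - 1) + (3/2 - 1)" by (intro add_mono ln_le_minus_one) auto
  finally show ?thesis by simp
qed

lemma H_15: "H (1/15) \<ge> 1/3"
proof -
  have l1: "ln (15/14::real) \<ge> 1/15"
    using ln_le_minus_one[of "14/15::real"] by (simp add: ln_div)
  have l2: "ln (16/15::real) \<le> 1/15"
    using ln_le_minus_one[of "16/15::real"] by simp
  have l16: "ln (16::real) = 4 * ln 2"
    using ln_realpow[of 2 4] by simp
  have l15: "ln (15::real) = ln 16 - ln (16/15)" by (simp add: ln_div)
  have "H (1/15) = ((1/15) * ln 15 + (14/15) * ln (15/14)) / ln 2"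
    unfolding H_def log_def by (simp add: ln_div field_simps)
  moreover have "(1/15) * ln (15::real) + (14/15) * ln (15/14) \<ge> ln 2 / 3"
    using l1 l2 l16 l15 ln2_le by linarith
  ultimately show ?thesis
    using divide_right_mono[of "ln 2 / 3" "(1/15) * ln (15::real) + (14/15) * ln (15/14)" "ln 2"]
    by simp
qed

lemma delta_small:
  assumes "0 \<le> \<delta>" "\<delta> \<le> 1/2" "H \<delta> < 1/3"
  shows "\<delta> < 1/15"
proof (rule ccontr)
  assume "\<not> \<delta> < 1/15"
  then have "H (1/15) \<le> H \<delta>" using assms by (intro H_mono) auto
  with H_15 assms show False by simp
qed


lemma parity_toggle:
  assumes "t \<in> S" and that: "finite c"
  shows "odd (card (S \<inter> (if t \<in> c then c - {t} else insert t c))) \<longleftrightarrow> \<not> odd (card (S \<inter> c))"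
proof (cases "t \<in> c")
  case True
  then have "S \<inter> (c - {t}) = (S \<inter> c) - {t}" by auto
  moreover have "t \<in> S \<inter> c" using True assms by auto
  moreover have "card (S \<inter> c) > 0" using True assms that by (metis card_gt_0_iff empty_iff finite_Int IntI)
  ultimately show ?thesis using True that by auto
next
  case False
  then have "S \<inter> insert t c = insert t (S \<inter> c)" using assms by auto
  moreover have "t \<notin> S \<inter> c" using False by auto
  ultimately show ?thesis using False that by auto
qed

lemma parity_half:
  assumes "finite R" "t \<in> S" "t \<in> R"
  shows "card {c \<in> Pow R. odd (card (S \<inter> c))} = card {c \<in> Pow R. \<not> odd (card (S \<inter> c))}"
proof (rule bij_betw_same_card)
  let ?f = "\<lambda>c. if t \<in> c then c - {t} else insert t c"
  show "bij_betw ?f {c \<in> Pow R. odd (card (S \<inter> c))} {c \<in> Pow R. \<not> odd (card (S \<inter> c))}"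
  proof (rule bij_betw_byWitness[where f' = ?f])
    show "\<forall>a\<in>{c \<in> Pow R. odd (card (S \<inter> c))}. ?f (?f a) = a" by auto
    show "\<forall>a\<in>{c \<in> Pow R. \<not> odd (card (S \<inter> c))}. ?f (?f a) = a" by auto
    show "?f ` {c \<in> Pow R. odd (card (S \<inter> c))} \<subseteq> {c \<in> Pow R. \<not> odd (card (S \<inter> c))}"
    proof (rule image_subsetI)
      fix c assume c: "c \<in> {c \<in> Pow R. odd (card (S \<inter> c))}"
      then have "finite c" using assms(1) by (auto intro: finite_subset)
      from parity_toggle[OF assms(2) this] c assms(3) show "?f c \<in> {c \<in> Pow R. \<not> odd (card (S \<inter> c))}"
        by auto
    qed
    show "?f ` {c \<in> Pow R. \<not> odd (card (S \<inter> c))} \<subseteq> {c \<in> Pow R. odd (card (S \<inter> c))}"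
    proof (rule image_subsetI)
      fix c assume c: "c \<in> {c \<in> Pow R. \<not> odd (card (S \<inter> c))}"
      then have "finite c" using assms(1) by (auto intro: finite_subset)
      from parity_toggle[OF assms(2) this] c assms(3) show "?f c \<in> {c \<in> Pow R. odd (card (S \<inter> c))}"
        by auto
    qed
  qed
qed


definition colsum :: "real \<Rightarrow> bool \<Rightarrow> nat set \<Rightarrow> nat set \<Rightarrow> real" where
  "colsum x a S R = (\<Sum>c\<in>Pow R. if a \<noteq> odd (card (S \<inter> c)) then x else 1)"

lemma colsum_le:
  assumes "finite R" "0 \<le> x" "x \<le> 1"
  shows "colsum x a S R \<le> 2 ^ card R"
proof -
  have "colsum x a S R \<le> (\<Sum>c\<in>Pow R. 1)"
    unfolding colsum_def using assms by (intro sum_mono) auto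
  also have "\<dots> = 2 ^ card R" using assms by (simp add: card_Pow)
  finally show ?thesis .
qed

lemma colsum_nonneg:
  assumes "0 \<le> x"
  shows "0 \<le> colsum x a S R"
  unfolding colsum_def using assms by (intro sum_nonneg) auto

lemma colsum_eq:
  assumes "finite R" "t \<in> S" "t \<in> R"
  shows "colsum x a S R = 2 ^ card R * ((1 + x) / 2)"
proof -
  define A where "A = {c \<in> Pow R. odd (card (S \<inter> c))}"
  define B where "B = {c \<in> Pow R. \<not> odd (card (S \<inter> c))}"
  have AB: "card A = card B" unfolding A_def B_def using parity_half[OF assms] .
  have fin: "finite A" "finite B" using assms(1) unfolding A_def B_def by auto
  have un: "Pow R = A \<union> B" "A \<inter> B = {}" unfolding A_def B_def by auto
  have "card A + card B = card (Pow R)" using card_Un_disjoint[OF fin un(2)] un(1) by simp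
  then have cA: "2 * real (card A) = 2 ^ card R" using AB assms(1) card_Pow[of R]
    by (metis mult_2 of_nat_add of_nat_numeral of_nat_power)
  have "colsum x a S R = (\<Sum>c\<in>A. if a \<noteq> odd (card (S \<inter> c)) then x else 1)
       + (\<Sum>c\<in>B. if a \<noteq> odd (card (S \<inter> c)) then x else 1)"
    unfolding colsum_def un(1) using sum.union_disjoint[OF fin un(2)] by simp
  also have "\<dots> = (\<Sum>c\<in>A. if a then 1 else x) + (\<Sum>c\<in>B. if a then x else 1)"
    unfolding A_def B_def by (intro arg_cong2[where f="(+)"] sum.cong) auto
  also have "\<dots> = real (card A) * (1 + x)" using AB by (auto simp: algebra_simps)
  finally show ?thesis using cA by (simp add: field_simps)
qed


definition Bk :: "nat \<Rightarrow> nat \<Rightarrow> (nat set \<times> nat set) set" where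
  "Bk k j = Pow {..<j} \<times> Pow {j<..<k}"

definition Fam :: "nat \<Rightarrow> (nat \<Rightarrow> nat set \<times> nat set) set" where
  "Fam k = PiE {..<k} (Bk k)"

definition mat :: "nat \<Rightarrow> (nat \<Rightarrow> nat set \<times> nat set) \<Rightarrow> nat \<Rightarrow> nat \<Rightarrow> bool" where
  "mat k P i j = (if j < k then i = j else if j < 2*k then (i = j - k \<or> i \<in> fst (P (j - k)))
                  else (i = j - 2*k \<or> i \<in> snd (P (j - 2*k))))"

definition wt :: "nat \<Rightarrow> (nat \<Rightarrow> nat set \<times> nat set) \<Rightarrow> nat set \<Rightarrow> nat" where
  "wt k P S = card {j \<in> {..<3*k}. row_comb (mat k P) S j}"

lemma odd_insert_comb:
  assumes "finite S" "j \<notin> c"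
  shows "odd (card {i\<in>S. i = j \<or> i \<in> c}) = ((j\<in>S) \<noteq> odd (card (S\<inter>c)))"
proof (cases "j \<in> S")
  case True
  then have "{i\<in>S. i = j \<or> i \<in> c} = insert j (S \<inter> c)" by auto
  then show ?thesis using True assms by auto
next
  case False
  then have "{i\<in>S. i = j \<or> i \<in> c} = S \<inter> c" by auto
  then show ?thesis using False by auto
qed

lemma Fam_mem:
  assumes "P \<in> Fam k" "j < k"
  shows "fst (P j) \<subseteq> {..<j}" "snd (P j) \<subseteq> {j<..<k}"
proof -
  have "P j \<in> Pow {..<j} \<times> Pow {j<..<k}" using assms unfolding Fam_def Bk_def by auto
  then show "fst (P j) \<subseteq> {..<j}" "snd (P j) \<subseteq> {j<..<k}" by (auto simp: mem_Times_iff)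
qed

lemma rc1:
  assumes "j < k"
  shows "row_comb (mat k P) S j = (j \<in> S)"
proof -
  have "{i\<in>S. mat k P i j} = S \<inter> {j}" using assms unfolding mat_def by auto
  moreover have "S \<inter> {j} = (if j \<in> S then {j} else {})" by auto
  ultimately show ?thesis unfolding row_comb_def by simp
qed

lemma rc2:
  assumes "P \<in> Fam k" "j < k" "finite S"
  shows "row_comb (mat k P) S (k + j) = ((j\<in>S) \<noteq> odd (card (S \<inter> fst (P j))))"
proof -
  have "{i\<in>S. mat k P i (k+j)} = {i\<in>S. i = j \<or> i \<in> fst (P j)}" using assms unfolding mat_def by auto
  moreover have "j \<notin> fst (P j)" using Fam_mem[OF assms(1,2)] by auto
  ultimately show ?thesis unfolding row_comb_def using odd_insert_comb[OF assms(3)] by simp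
qed

lemma rc3:
  assumes "P \<in> Fam k" "j < k" "finite S"
  shows "row_comb (mat k P) S (2*k + j) = ((j\<in>S) \<noteq> odd (card (S \<inter> snd (P j))))"
proof -
  have "{i\<in>S. mat k P i (2*k+j)} = {i\<in>S. i = j \<or> i \<in> snd (P j)}" using assms unfolding mat_def by auto
  moreover have "j \<notin> snd (P j)" using Fam_mem[OF assms(1,2)] by auto
  ultimately show ?thesis unfolding row_comb_def using odd_insert_comb[OF assms(3)] by simp
qed

lemma pow_card_prod:
  assumes "finite A"
  shows "x ^ card {j\<in>A. Q j} = (\<Prod>j\<in>A. if Q j then x else 1)"
proof -
  have "(\<Prod>j\<in>A. if Q j then x else 1) = (\<Prod>j\<in>A \<inter> {j. Q j}. x) * (\<Prod>j\<in>A \<inter> - {j. Q j}. 1)"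
    using assms by (rule prod.If_cases)
  also have "\<dots> = x ^ card (A \<inter> {j. Q j})" by simp
  also have "A \<inter> {j. Q j} = {j\<in>A. Q j}" by auto
  finally show ?thesis by simp
qed

lemma prod_split3:
  fixes f :: "nat \<Rightarrow> 'a::comm_monoid_mult"
  shows "prod f {..<3*k} = prod f {..<k} * prod (\<lambda>j. f (k + j)) {..<k} * prod (\<lambda>j. f (2*k + j)) {..<k}"
proof -
  have "prod f {..<3*k} = prod f {0..<k} * prod f {k..<2*k} * prod f {2*k..<3*k}"
    by (simp add: prod.atLeastLessThan_concat lessThan_atLeast0)
  also have "prod f {k..<2*k} = prod (\<lambda>j. f (k + j)) {0..<k}"
    using prod.shift_bounds_nat_ivl[of f 0 k k] by (simp add: mult_2 add.commute)
  also have "prod f {2*k..<3*k} = prod (\<lambda>j. f (2*k + j)) {0..<k}"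
    using prod.shift_bounds_nat_ivl[of f 0 "2*k" k] by (simp add: add.commute)
  finally show ?thesis by (simp add: lessThan_atLeast0)
qed

lemma wt_pow:
  assumes "P \<in> Fam k" "S \<subseteq> {..<k}"
  shows "x ^ wt k P S = x ^ card S * (\<Prod>j<k. (if (j\<in>S) \<noteq> odd (card (S \<inter> fst (P j))) then x else 1)
                                       * (if (j\<in>S) \<noteq> odd (card (S \<inter> snd (P j))) then x else 1))"
proof -
  have fS: "finite S" using assms(2) finite_subset by blast
  have "x ^ wt k P S = (\<Prod>j<3*k. if row_comb (mat k P) S j then x else 1)"
    unfolding wt_def by (rule pow_card_prod) simp
  also have "\<dots> = (\<Prod>j<k. if row_comb (mat k P) S j then x else 1)
      * (\<Prod>j<k. if row_comb (mat k P) S (k+j) then x else 1)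
      * (\<Prod>j<k. if row_comb (mat k P) S (2*k+j) then x else 1)"
    by (rule prod_split3)
  also have "(\<Prod>j<k. if row_comb (mat k P) S j then x else 1) = (\<Prod>j<k. if j \<in> S then x else 1)"
    by (intro prod.cong) (auto simp: rc1)
  also have "\<dots> = x ^ card {j\<in>{..<k}. j \<in> S}" by (rule pow_card_prod[symmetric]) simp
  also have "{j\<in>{..<k}. j \<in> S} = S" using assms(2) by auto
  also have "(\<Prod>j<k. if row_comb (mat k P) S (k+j) then x else 1) =
      (\<Prod>j<k. if (j\<in>S) \<noteq> odd (card (S \<inter> fst (P j))) then x else 1)"
    by (intro prod.cong) (auto simp: rc2[OF assms(1) _ fS])
  also have "(\<Prod>j<k. if row_comb (mat k P) S (2*k+j) then x else 1) =
      (\<Prod>j<k. if (j\<in>S) \<noteq> odd (card (S \<inter> snd (P j))) then x else 1)"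
    by (intro prod.cong) (auto simp: rc3[OF assms(1) _ fS])
  finally show ?thesis by (simp add: prod.distrib mult.assoc)
qed


lemma col_prod:
  fixes g h :: "_ \<Rightarrow> real"
  shows "(\<Sum>y\<in>A \<times> B. g (fst y) * h (snd y)) = sum g A * sum h B"
  unfolding sum.cartesian_product' fst_conv snd_conv by (rule sum_product[symmetric])

lemma fam_sum:
  assumes "S \<subseteq> {..<k}"
  shows "(\<Sum>P\<in>Fam k. x ^ wt k P S) =
     x ^ card S * (\<Prod>j<k. colsum x (j\<in>S) S {..<j} * colsum x (j\<in>S) S {j<..<k})"
proof -
  define f where "f = (\<lambda>j y. (if (j\<in>S) \<noteq> odd (card (S \<inter> fst y)) then x else 1)
                                       * (if (j\<in>S) \<noteq> odd (card (S \<inter> snd y)) then x else 1))"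
  have "(\<Sum>P\<in>Fam k. x ^ wt k P S) = (\<Sum>P\<in>Fam k. x ^ card S * (\<Prod>j<k. f j (P j)))"
    using wt_pow[OF _ assms] unfolding f_def by (intro sum.cong) auto
  also have "\<dots> = x ^ card S * (\<Sum>P\<in>Fam k. \<Prod>j<k. f j (P j))" by (simp add: sum_distrib_left)
  also have "(\<Sum>P\<in>Fam k. \<Prod>j<k. f j (P j)) = (\<Prod>j<k. \<Sum>y\<in>Bk k j. f j y)"
    unfolding Fam_def by (rule prod_sum_PiE[symmetric]) (auto simp: Bk_def)
  also have "\<dots> = (\<Prod>j<k. colsum x (j\<in>S) S {..<j} * colsum x (j\<in>S) S {j<..<k})"
    unfolding Bk_def f_def colsum_def by (intro prod.cong refl col_prod)
  finally show ?thesis .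
qed

lemma card_Bk: "real (card (Bk k j)) = 2 ^ card {..<j} * 2 ^ card {j<..<k}"
  unfolding Bk_def by (simp add: card_cartesian_product card_Pow)

lemma card_Fam: "card (Fam k) = (\<Prod>j<k. card (Bk k j))"
  unfolding Fam_def by (simp add: card_PiE)

lemma fam_bound:
  assumes "S \<subseteq> {..<k}" "p \<in> S" "0 \<le> x" "x \<le> 1"
  shows "(\<Sum>P\<in>Fam k. x ^ wt k P S) \<le> x ^ card S * (real (card (Fam k)) * ((1 + x) / 2) ^ (k - 1))"
proof -
  define c where "c = (1 + x) / 2"
  have pk: "p < k" using assms by auto
  have "(\<Prod>j<k. colsum x (j\<in>S) S {..<j} * colsum x (j\<in>S) S {j<..<k})
      \<le> (\<Prod>j<k. real (card (Bk k j)) * (if j \<noteq> p then c else 1))"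
  proof (rule prod_mono, safe)
    fix j assume j: "j < k"
    show "0 \<le> colsum x (j\<in>S) S {..<j} * colsum x (j\<in>S) S {j<..<k}"
      using colsum_nonneg assms by simp
    have le1: "colsum x (j\<in>S) S {..<j} \<le> 2 ^ card {..<j}" using colsum_le[of "{..<j}" x "j\<in>S" S] assms by blast
    have le2: "colsum x (j\<in>S) S {j<..<k} \<le> 2 ^ card {j<..<k}" using colsum_le[of "{j<..<k}" x "j\<in>S" S] assms by blast
    have n1: "0 \<le> colsum x (j\<in>S) S {..<j}" "0 \<le> colsum x (j\<in>S) S {j<..<k}"
      using colsum_nonneg assms by auto
    have "p < j \<or> j < p \<or> j = p" by auto
    then show "colsum x (j\<in>S) S {..<j} * colsum x (j\<in>S) S {j<..<k}
         \<le> real (card (Bk k j)) * (if j \<noteq> p then c else 1)"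
    proof (elim disjE)
      assume "p < j"
      then have e: "colsum x (j\<in>S) S {..<j} = 2 ^ card {..<j} * c"
        unfolding c_def by (intro colsum_eq[of _ p]) (use assms in auto)
      have "colsum x (j\<in>S) S {..<j} * colsum x (j\<in>S) S {j<..<k} \<le> 2 ^ card {..<j} * c * 2 ^ card {j<..<k}"
        unfolding e using le2 assms c_def by (intro mult_left_mono) auto
      then show ?thesis using \<open>p < j\<close> unfolding card_Bk by (simp add: mult_ac)
    next
      assume "j < p"
      then have e: "colsum x (j\<in>S) S {j<..<k} = 2 ^ card {j<..<k} * c"
        unfolding c_def by (intro colsum_eq[of _ p]) (use assms pk in auto)
      have "colsum x (j\<in>S) S {..<j} * colsum x (j\<in>S) S {j<..<k} \<le> 2 ^ card {..<j} * (2 ^ card {j<..<k} * c)"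
        unfolding e using le1 assms c_def by (intro mult_right_mono) auto
      then show ?thesis using \<open>j < p\<close> unfolding card_Bk by (simp add: mult_ac)
    qed (use le1 le2 n1 in \<open>auto simp: card_Bk intro: mult_mono\<close>)
  qed
  also have "\<dots> = real (card (Fam k)) * c ^ (k - 1)"
  proof -
    have "(\<Prod>j<k. real (card (Bk k j)) * (if j \<noteq> p then c else 1))
        = (\<Prod>j<k. real (card (Bk k j))) * (\<Prod>j<k. if j \<noteq> p then c else 1)"
      by (rule prod.distrib)
    moreover have "(\<Prod>j<k. if j \<noteq> p then c else 1) = c ^ card {j\<in>{..<k}. j \<noteq> p}"
      by (rule pow_card_prod[symmetric]) simp
    moreover have "{j\<in>{..<k}. j \<noteq> p} = {..<k} - {p}" by auto
    moreover have "card ({..<k} - {p}) = k - 1" using pk by simp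
    ultimately show ?thesis by (simp add: card_Fam)
  qed
  finally have "(\<Prod>j<k. colsum x (j\<in>S) S {..<j} * colsum x (j\<in>S) S {j<..<k})
      \<le> real (card (Fam k)) * c ^ (k - 1)" .
  then show ?thesis unfolding fam_sum[OF assms(1)] c_def
    using assms by (intro mult_left_mono) auto
qed


lemma sum_pow_card:
  fixes x :: real
  assumes "finite A"
  shows "(\<Sum>S\<in>Pow A. x ^ card S) = (1 + x) ^ card A"
  using assms
proof (induction A rule: finite_induct)
  case empty
  then show ?case by simp
next
  case (insert a A)
  have inj: "inj_on (insert a) (Pow A)" using insert(2) by (auto simp: inj_on_def)
  have disj: "Pow A \<inter> insert a ` Pow A = {}" using insert(2) by auto
  have fin: "finite (Pow A)" "finite (insert a ` Pow A)" using insert(1) by auto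
  have "(\<Sum>S\<in>Pow (insert a A). x ^ card S) = (\<Sum>S\<in>Pow A. x ^ card S) + (\<Sum>S\<in>insert a ` Pow A. x ^ card S)"
    unfolding Pow_insert using sum.union_disjoint[OF fin disj] by simp
  also have "(\<Sum>S\<in>insert a ` Pow A. x ^ card S) = (\<Sum>S\<in>Pow A. x ^ card (insert a S))"
    using sum.reindex[OF inj] by simp
  also have "\<dots> = (\<Sum>S\<in>Pow A. x * x ^ card S)"
  proof (intro sum.cong refl)
    fix S assume "S \<in> Pow A"
    then have "finite S" "a \<notin> S" using insert(1,2) finite_subset by auto
    then show "x ^ card (insert a S) = x * x ^ card S" by simp
  qed
  also have "(\<Sum>S\<in>Pow A. x * x ^ card S) = x * (1 + x) ^ card A"
    using insert(3) by (simp add: sum_distrib_left[symmetric])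
  finally show ?case using insert by (simp add: algebra_simps)
qed

definition Bad :: "nat \<Rightarrow> (nat \<Rightarrow> nat set \<times> nat set) \<Rightarrow> real \<Rightarrow> nat set set" where
  "Bad k P d = {S \<in> Pow {..<k}. S \<noteq> {} \<and> real (wt k P S) < d}"

lemma ind_bound:
  assumes "real w < d"
  shows "1 \<le> 10 ^ nat \<lceil>d\<rceil> * (1/10::real) ^ w"
proof -
  have "w \<le> nat \<lceil>d\<rceil>" using assms by linarith
  then have "(10::real) ^ w \<le> 10 ^ nat \<lceil>d\<rceil>" by (intro power_increasing) auto
  then show ?thesis by (simp add: power_one_over field_simps)
qed

lemma count_bad:
  "(\<Sum>P\<in>Fam k. real (card (Bad k P d))) \<le>
     10 ^ nat \<lceil>d\<rceil> * (real (card (Fam k)) * (11/20) ^ (k - 1)) * (11/10) ^ k"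
proof -
  define x :: real where "x = 1/10"
  define D where "D = nat \<lceil>d\<rceil>"
  define M where "M = real (card (Fam k)) * (11/20) ^ (k - 1)"
  have "(\<Sum>P\<in>Fam k. real (card (Bad k P d))) =
       (\<Sum>P\<in>Fam k. \<Sum>S\<in>Pow {..<k}. if S \<noteq> {} \<and> real (wt k P S) < d then 1 else 0)"
    unfolding Bad_def by (intro sum.cong refl) (simp add: sum.inter_filter[symmetric])
  also have "\<dots> \<le> (\<Sum>P\<in>Fam k. \<Sum>S\<in>Pow {..<k}. if S \<noteq> {} then 10 ^ D * x ^ wt k P S else 0)"
    using ind_bound unfolding x_def D_def by (intro sum_mono) auto
  also have "\<dots> = (\<Sum>S\<in>Pow {..<k}. \<Sum>P\<in>Fam k. if S \<noteq> {} then 10 ^ D * x ^ wt k P S else 0)"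
    by (rule sum.swap)
  also have "\<dots> \<le> (\<Sum>S\<in>Pow {..<k}. 10 ^ D * (x ^ card S * M))"
  proof (intro sum_mono)
    fix S assume S: "S \<in> Pow {..<k}"
    show "(\<Sum>P\<in>Fam k. if S \<noteq> {} then 10 ^ D * x ^ wt k P S else 0) \<le> 10 ^ D * (x ^ card S * M)"
    proof (cases "S = {}")
      case True
      then show ?thesis unfolding M_def x_def by simp
    next
      case False
      then obtain p where "p \<in> S" by auto
      have "(\<Sum>P\<in>Fam k. x ^ wt k P S) \<le> x ^ card S * M"
        using fam_bound[of S k p x] S \<open>p \<in> S\<close> unfolding M_def x_def by simp
      then show ?thesis using False by (simp add: sum_distrib_left[symmetric])
    qed
  qed
  also have "\<dots> = 10 ^ D * M * (\<Sum>S\<in>Pow {..<k}. x ^ card S)"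
    by (simp add: sum_distrib_left mult_ac)
  also have "\<dots> = 10 ^ D * M * (11/10) ^ k"
    using sum_pow_card[of "{..<k}" x] unfolding x_def by simp
  finally show ?thesis unfolding D_def M_def .
qed


lemma gen_mat: "generator_matrix (mat k P) k (3*k)"
  unfolding generator_matrix_def rows_independent_def
proof (intro allI impI)
  fix S assume S: "S \<subseteq> {..<k}" and h: "\<forall>j<3*k. \<not> row_comb (mat k P) S j"
  show "S = {}"
  proof (rule ccontr)
    assume "S \<noteq> {}"
    then obtain i where "i \<in> S" by auto
    with S have "i < k" by auto
    with h \<open>i \<in> S\<close> rc1[of i k P S] show False by auto
  qed
qed

lemma ci1: "cols_independent (mat k P) k {..<k}"
  unfolding cols_independent_def
proof (intro allI impI)
  fix T assume T: "T \<subseteq> {..<k}" and h: "\<forall>i<k. \<not> odd (card {j \<in> T. mat k P i j})"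
  show "T = {}"
  proof (rule ccontr)
    assume "T \<noteq> {}"
    then obtain i where i: "i \<in> T" by auto
    with T have "i < k" by auto
    have "{j \<in> T. mat k P i j} = {i}" using T i unfolding mat_def by auto
    with h \<open>i < k\<close> show False by auto
  qed
qed

lemma ci2:
  assumes "P \<in> Fam k"
  shows "cols_independent (mat k P) k {k..<2*k}"
  unfolding cols_independent_def
proof (intro allI impI)
  fix T assume T: "T \<subseteq> {k..<2*k}" and h: "\<forall>i<k. \<not> odd (card {j \<in> T. mat k P i j})"
  show "T = {}"
  proof (rule ccontr)
    assume ne: "T \<noteq> {}"
    have fT: "finite T" using T finite_subset by blast
    define m where "m = Max T"
    have m: "m \<in> T" "\<forall>j\<in>T. j \<le> m" using Max_in[OF fT ne] Max_ge[OF fT] unfolding m_def by auto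
    have mk: "k \<le> m" "m < 2*k" using m T by auto
    have "{j \<in> T. mat k P (m - k) j} = {m}"
    proof safe
      fix j assume j: "j \<in> T" "mat k P (m - k) j"
      have jk: "k \<le> j" "j < 2*k" "j \<le> m" using j m T by auto
      have "fst (P (j - k)) \<subseteq> {..<j-k}" using Fam_mem[OF assms, of "j-k"] jk by auto
      then show "j = m" using j(2) jk unfolding mat_def by auto
    next
      show "m \<in> T" by (rule m)
      show "mat k P (m - k) m" using mk unfolding mat_def by auto
    qed
    moreover have "m - k < k" using mk by auto
    ultimately show False using h by fastforce
  qed
qed

lemma ci3:
  assumes "P \<in> Fam k"
  shows "cols_independent (mat k P) k {2*k..<3*k}"
  unfolding cols_independent_def
proof (intro allI impI)
  fix T assume T: "T \<subseteq> {2*k..<3*k}" and h: "\<forall>i<k. \<not> odd (card {j \<in> T. mat k P i j})"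
  show "T = {}"
  proof (rule ccontr)
    assume ne: "T \<noteq> {}"
    have fT: "finite T" using T finite_subset by blast
    define m where "m = Min T"
    have m: "m \<in> T" "\<forall>j\<in>T. m \<le> j" using Min_in[OF fT ne] Min_le[OF fT] unfolding m_def by auto
    have mk: "2*k \<le> m" "m < 3*k" using m T by auto
    have "{j \<in> T. mat k P (m - 2*k) j} = {m}"
    proof safe
      fix j assume j: "j \<in> T" "mat k P (m - 2*k) j"
      have jk: "2*k \<le> j" "j < 3*k" "m \<le> j" using j m T by auto
      have "snd (P (j - 2*k)) \<subseteq> {j-2*k<..<k}" using Fam_mem[OF assms, of "j-2*k"] jk by auto
      then have "m - 2*k \<notin> snd (P (j - 2*k))" using jk mk by (auto dest!: subsetD)
      then show "j = m" using j(2) jk mk unfolding mat_def by auto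
    next
      show "m \<in> T" by (rule m)
      show "mat k P (m - 2*k) m" using mk unfolding mat_def by auto
    qed
    moreover have "m - 2*k < k" using mk by auto
    ultimately show False using h by fastforce
  qed
qed

lemma cis_mat:
  assumes "P \<in> Fam k"
  shows "three_CIS (mat k P) k (3*k)"
  unfolding three_CIS_def
proof (intro exI conjI)
  show "{..<k} \<union> {k..<2*k} \<union> {2*k..<3*k} = {..<3*k}" by auto
  show "{..<k} \<inter> {k..<2*k} = {}" "{..<k} \<inter> {2*k..<3*k} = {}" "{k..<2*k} \<inter> {2*k..<3*k} = {}" by auto
  show "information_set (mat k P) k (3*k) {..<k}" unfolding information_set_def using ci1 by auto
  show "information_set (mat k P) k (3*k) {k..<2*k}" unfolding information_set_def using ci2[OF assms] by auto
  show "information_set (mat k P) k (3*k) {2*k..<3*k}" unfolding information_set_def using ci3[OF assms] by auto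
qed

lemma odd_card_symdiff:
  assumes "finite A" "finite B"
  shows "odd (card ((A - B) \<union> (B - A))) = (odd (card A) \<noteq> odd (card B))"
proof -
  have "card ((A - B) \<union> (B - A)) = card (A - B) + card (B - A)"
    using assms by (intro card_Un_disjoint) auto
  moreover have "card A = card (A - B) + card (A \<inter> B)"
  proof -
    have "A = (A - B) \<union> (A \<inter> B)" by auto
    then show ?thesis using assms card_Un_disjoint[of "A - B" "A \<inter> B"] by auto
  qed
  moreover have "card B = card (B - A) + card (A \<inter> B)"
  proof -
    have "B = (B - A) \<union> (A \<inter> B)" by auto
    then show ?thesis using assms card_Un_disjoint[of "B - A" "A \<inter> B"] by auto
  qed
  ultimately show ?thesis by auto
qed

lemma row_comb_symdiff:
  assumes "finite S1" "finite S2"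
  shows "row_comb G ((S1 - S2) \<union> (S2 - S1)) j = (row_comb G S1 j \<noteq> row_comb G S2 j)"
proof -
  have "{i \<in> (S1 - S2) \<union> (S2 - S1). G i j} = ({i\<in>S1. G i j} - {i\<in>S2. G i j}) \<union> ({i\<in>S2. G i j} - {i\<in>S1. G i j})"
    by auto
  then show ?thesis unfolding row_comb_def
    using odd_card_symdiff[of "{i\<in>S1. G i j}" "{i\<in>S2. G i j}"] assms by simp
qed

lemma dist_mat:
  assumes "Bad k P d = {}"
  shows "min_dist_ge (code (mat k P) k (3*k)) (3*k) d"
  unfolding min_dist_ge_def
proof (intro ballI impI)
  fix x y assume x: "x \<in> code (mat k P) k (3*k)" and y: "y \<in> code (mat k P) k (3*k)" and ne: "x \<noteq> y"
  obtain S1 where S1: "S1 \<subseteq> {..<k}" "x = (\<lambda>j. j < 3*k \<and> row_comb (mat k P) S1 j)" using x unfolding code_def by auto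
  obtain S2 where S2: "S2 \<subseteq> {..<k}" "y = (\<lambda>j. j < 3*k \<and> row_comb (mat k P) S2 j)" using y unfolding code_def by auto
  have f: "finite S1" "finite S2" using S1 S2 finite_subset by auto
  define T where "T = (S1 - S2) \<union> (S2 - S1)"
  have "S1 \<noteq> S2" using ne S1 S2 by auto
  then have "T \<noteq> {}" unfolding T_def by auto
  moreover have "T \<in> Pow {..<k}" unfolding T_def using S1 S2 by auto
  ultimately have "\<not> real (wt k P T) < d" using assms unfolding Bad_def by auto
  moreover have "hamming_dist (3*k) x y = wt k P T"
    unfolding hamming_dist_def wt_def T_def S1(2) S2(2) using row_comb_symdiff[OF f] by (intro arg_cong[where f=card]) auto
  ultimately show "d \<le> real (hamming_dist (3*k) x y)" by simp
qed


theorem proposition3: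
  fixes \<delta> :: real
  assumes "0 \<le> \<delta>" and "\<delta> \<le> 1/2" and "H \<delta> < 1/3"
  shows "\<exists>K. \<forall>k\<ge>K. \<exists>G. generator_matrix G k (3*k) \<and> three_CIS G k (3*k)
           \<and> min_dist_ge (code G k (3*k)) (3*k) (3 * \<delta> * real k)"
proof -
  have ds: "\<delta> < 1/15" using delta_small assms by blast
  define q :: real where "q = 10 powr (1/5)"
  define r :: real where "r = q * (121/200)"
  have q5: "q ^ 5 = 10" unfolding q_def by (simp add: powr_power)
  have r0: "0 \<le> r" unfolding r_def q_def by simp
  have r5: "r ^ 5 = 10 * (121/200)^5" unfolding r_def power_mult_distrib q5 ..
  have r1: "r < 1"
  proof (rule ccontr)
    assume "\<not> r < 1"
    then have "1 \<le> r ^ 5" by (simp add: one_le_power)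
    then show False unfolding r5 by (simp add: power_divide)
  qed
  obtain n where n: "r ^ n < 11/200" using real_arch_pow_inv[OF _ r1, of "11/200"] by auto
  show ?thesis
  proof (intro exI[of _ "Suc n"] allI impI)
    fix k assume k: "Suc n \<le> k"
    define d where "d = 3 * \<delta> * real k"
    define D where "D = nat \<lceil>d\<rceil>"
    define cF where "cF = real (card (Fam k))"
    have cF0: "0 < cF"
    proof -
      have "cF = (\<Prod>j<k. real (card (Bk k j)))" unfolding cF_def card_Fam by simp
      also have "\<dots> > 0" by (intro prod_pos) (simp add: card_Bk)
      finally show ?thesis .
    qed
    have "3 * \<delta> \<le> 1/5" using ds by simp
    then have "3 * \<delta> * real k \<le> 1/5 * real k" by (rule mult_right_mono) auto
    then have dle: "d \<le> real k / 5" unfolding d_def by simp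
    have D1: "real D \<le> real k / 5 + 1" unfolding D_def using dle assms(1) d_def
      by (simp add: of_nat_nat) linarith
    have "(10::real) ^ D = 10 powr real D" by (simp add: powr_realpow)
    also have "\<dots> \<le> 10 powr (real k / 5 + 1)" using D1 by (intro powr_mono) auto
    also have "\<dots> = 10 * q ^ k" unfolding q_def by (simp add: powr_add powr_power mult_ac)
    finally have tenD: "(10::real) ^ D \<le> 10 * q ^ k" .
    have k1: "(11/20::real) ^ (k - 1) = (11/20) ^ k * (20/11)"
      using k by (cases k) auto
    have "10 ^ D * (cF * (11/20) ^ (k - 1)) * (11/10) ^ k
        \<le> (10 * q ^ k) * (cF * (11/20) ^ (k - 1)) * (11/10) ^ k"
      using tenD cF0 by (intro mult_right_mono) auto
    also have "\<dots> = cF * (200/11) * (q * (11/20) * (11/10)) ^ k"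
      unfolding k1 power_mult_distrib by (simp add: field_simps)
    also have "\<dots> = cF * (200/11) * r ^ k" unfolding r_def by (simp add: mult_ac)
    also have "\<dots> < cF * (200/11) * (11/200)"
    proof -
      have "r ^ k \<le> r ^ n" using k r0 r1 by (intro power_decreasing) auto
      then have "r ^ k < 11/200" using n by simp
      then show ?thesis using cF0 by simp
    qed
    also have "\<dots> = cF" by simp
    finally have lt: "(\<Sum>P\<in>Fam k. real (card (Bad k P d))) < cF"
      using count_bad[of k d] unfolding D_def cF_def by linarith
    have "\<exists>P\<in>Fam k. card (Bad k P d) = 0"
    proof (rule ccontr)
      assume "\<not> ?thesis"
      then have "(\<Sum>P\<in>Fam k. (1::real)) \<le> (\<Sum>P\<in>Fam k. real (card (Bad k P d)))"
        by (intro sum_mono) auto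
      then show False using lt unfolding cF_def by simp
    qed
    then obtain P where P: "P \<in> Fam k" "card (Bad k P d) = 0" by auto
    have "finite (Bad k P d)" unfolding Bad_def by auto
    with P have "Bad k P d = {}" by simp
    then show "\<exists>G. generator_matrix G k (3*k) \<and> three_CIS G k (3*k)
           \<and> min_dist_ge (code G k (3*k)) (3*k) (3 * \<delta> * real k)"
      using gen_mat cis_mat[OF P(1)] dist_mat unfolding d_def by blast
  qed
qed

end
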